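(* Let $H$ be a Krull monoid with class group $G$, let $G_0\subseteq G$ be the set of classes containing a prime divisor, and let $G_1\subseteq G_0$ be the set of classes containing exactly one prime divisor. The following are equivalent: (a) every irreducible element of $H$ is absolutely irreducible; (b) every irreducible element of $\mathcal B(G_0)$ is absolutely irreducible, and for every irreducible $U\in\mathcal B(G_0)$ and every $g\in G_0\setminus G_1$ we have $\mathsf v_g(U)\le1$.
   Context: $H$ is a cancellative commutative monoid; it is Krull if $v$-noetherian and completely integrally closed. $\mathfrak X(H)$ is the set of nonempty divisorial prime ideals (prime divisors) of $H$; the class group $G$ (written additively) is the group of divisorial fractional ideals modulo principal ones, and $[\mathfrak p]$ is the class of $\mathfrak p$. For $G_0\subseteq G$, $\mathcal F(G_0)$ is the free abelian monoid on $G_0$; its elements $S=\prod_{g\in G_0}g^{\mathsf v_g(S)}$ are sequences, with sum $\sigma(S)=\sum\mathsf v_g(S)g$; $\mathcal B(G_0)=\{S\in\mathcal F(G_0):\sigma(S)=0\}$ is the monoid of zero-sum sequences. Irreducible: non-unit not a product of two non-units. An irreducible $r$ is absolutely irreducible if for every $n$, every factorization of $r^n$ into irreducibles coincides, up to order and associates, with $r\cdots r$. *)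

theory Defs
  imports Main "HOL-Library.Multiset"
begin

text \<open>A cancellative commutative monoid is represented (up to isomorphism) as a submonoid H
  of an abelian group of type 'a (e.g. its quotient group). The monoid operation is written +.\<close>

definition submonoid :: "'a::comm_monoid_add set \<Rightarrow> bool" where
  "submonoid M \<longleftrightarrow> 0 \<in> M \<and> (\<forall>a\<in>M. \<forall>b\<in>M. a + b \<in> M)"

definition unit_of :: "'a::comm_monoid_add set \<Rightarrow> 'a \<Rightarrow> bool" where
  "unit_of M u \<longleftrightarrow> u \<in> M \<and> (\<exists>v\<in>M. u + v = 0)"

definition assoc_in :: "'a::comm_monoid_add set \<Rightarrow> 'a \<Rightarrow> 'a \<Rightarrow> bool" where
  "assoc_in M a b \<longleftrightarrow> a \<in> M \<and> b \<in> M \<and> (\<exists>u. unit_of M u \<and> b = a + u)"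

definition irred :: "'a::comm_monoid_add set \<Rightarrow> 'a \<Rightarrow> bool" where
  "irred M r \<longleftrightarrow> r \<in> M \<and> \<not> unit_of M r \<and>
     (\<forall>a\<in>M. \<forall>b\<in>M. r = a + b \<longrightarrow> unit_of M a \<or> unit_of M b)"

primrec nmul :: "nat \<Rightarrow> 'a::comm_monoid_add \<Rightarrow> 'a" where
  "nmul 0 x = 0"
| "nmul (Suc n) x = x + nmul n x"

definition abs_irred :: "'a::comm_monoid_add set \<Rightarrow> 'a \<Rightarrow> bool" where
  "abs_irred M r \<longleftrightarrow> irred M r \<and>
     (\<forall>n\<ge>1. \<forall>xs. (\<forall>x\<in>set xs. irred M x) \<and> sum_list xs = nmul n r \<longrightarrow>
        length xs = n \<and> (\<forall>x\<in>set xs. assoc_in M x r))"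

definition qgrp :: "'a::ab_group_add set \<Rightarrow> 'a set" where
  "qgrp H = {a - b | a b. a \<in> H \<and> b \<in> H}"

definition colon :: "'a::ab_group_add set \<Rightarrow> 'a set \<Rightarrow> 'a set" where
  "colon H X = {y \<in> qgrp H. \<forall>x\<in>X. y + x \<in> H}"

definition vclose :: "'a::ab_group_add set \<Rightarrow> 'a set \<Rightarrow> 'a set" where
  "vclose H X = colon H (colon H X)"

definition s_ideal :: "'a::ab_group_add set \<Rightarrow> 'a set \<Rightarrow> bool" where
  "s_ideal H A \<longleftrightarrow> A \<subseteq> H \<and> (\<forall>a\<in>A. \<forall>h\<in>H. a + h \<in> A)"

definition divisorial_ideal :: "'a::ab_group_add set \<Rightarrow> 'a set \<Rightarrow> bool" where
  "divisorial_ideal H A \<longleftrightarrow> s_ideal H A \<and> vclose H A = A"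

definition prime_ideal :: "'a::ab_group_add set \<Rightarrow> 'a set \<Rightarrow> bool" where
  "prime_ideal H P \<longleftrightarrow> s_ideal H P \<and> P \<noteq> H \<and>
     (\<forall>a\<in>H. \<forall>b\<in>H. a + b \<in> P \<longrightarrow> a \<in> P \<or> b \<in> P)"

definition prime_divisor :: "'a::ab_group_add set \<Rightarrow> 'a set \<Rightarrow> bool" where
  "prime_divisor H P \<longleftrightarrow> P \<noteq> {} \<and> divisorial_ideal H P \<and> prime_ideal H P"

definition v_noetherian :: "'a::ab_group_add set \<Rightarrow> bool" where
  "v_noetherian H \<longleftrightarrow> (\<forall>A :: nat \<Rightarrow> 'a set.
     (\<forall>n. divisorial_ideal H (A n)) \<and> (\<forall>n. A n \<subseteq> A (Suc n)) \<longrightarrow> (\<exists>m. \<forall>n\<ge>m. A n = A m))"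

definition completely_integrally_closed :: "'a::ab_group_add set \<Rightarrow> bool" where
  "completely_integrally_closed H \<longleftrightarrow>
     (\<forall>x\<in>qgrp H. (\<exists>c\<in>H. \<forall>n\<ge>1. c + nmul n x \<in> H) \<longrightarrow> x \<in> H)"

definition krull_monoid :: "'a::ab_group_add set \<Rightarrow> bool" where
  "krull_monoid H \<longleftrightarrow> submonoid H \<and> v_noetherian H \<and> completely_integrally_closed H"

text \<open>The class of a divisorial (fractional) ideal A: its coset modulo principal fractional
  ideals x + H (x in the quotient group), i.e. the set of all translates x + A.\<close>
definition cls :: "'a::ab_group_add set \<Rightarrow> 'a set \<Rightarrow> 'a set set" where
  "cls H A = {(\<lambda>y. x + y) ` A | x. x \<in> qgrp H}"

definition class_add :: "'a::ab_group_add set \<Rightarrow> 'a set set \<Rightarrow> 'a set set \<Rightarrow> 'a set set" where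
  "class_add H C D = {vclose H {a + b | a b. a \<in> A \<and> b \<in> B} | A B. A \<in> C \<and> B \<in> D}"

definition class_sum :: "'a::ab_group_add set \<Rightarrow> 'a set set multiset \<Rightarrow> 'a set set" where
  "class_sum H S = foldr (class_add H) (SOME xs. mset xs = S) (cls H H)"

definition G0 :: "'a::ab_group_add set \<Rightarrow> 'a set set set" where
  "G0 H = {cls H P | P. prime_divisor H P}"

definition G1 :: "'a::ab_group_add set \<Rightarrow> 'a set set set" where
  "G1 H = {C \<in> G0 H. \<exists>!P. prime_divisor H P \<and> P \<in> C}"

text \<open>Monoid of zero-sum sequences over G0 (sequences = finite multisets).\<close>
definition BG0 :: "'a::ab_group_add set \<Rightarrow> 'a set set multiset set" where
  "BG0 H = {S. set_mset S \<subseteq> G0 H \<and> class_sum H S = cls H H}"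

end

theory Submission
  imports Defs
begin


definition mplus :: "'a::ab_group_add set \<Rightarrow> 'a set \<Rightarrow> 'a set" where
  "mplus X Y = {a + b | a b. a \<in> X \<and> b \<in> Y}"

definition tr :: "'a::ab_group_add \<Rightarrow> 'a set \<Rightarrow> 'a set" where
  "tr x X = (\<lambda>y. x + y) ` X"

locale krull =
  fixes H :: "'a::ab_group_add set"
  assumes K: "krull_monoid H"
begin

abbreviation "Q \<equiv> qgrp H"

lemma zero_H: "0 \<in> H" using K by (simp add: krull_monoid_def submonoid_def)
lemma add_H: "a \<in> H \<Longrightarrow> b \<in> H \<Longrightarrow> a + b \<in> H" using K by (simp add: krull_monoid_def submonoid_def)
lemma H_Q: "H \<subseteq> Q"
proof
  fix a assume "a \<in> H" then show "a \<in> Q" unfolding qgrp_def using zero_H by force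
qed
lemma Q_add: "x \<in> Q \<Longrightarrow> y \<in> Q \<Longrightarrow> x + y \<in> Q"
proof -
  assume "x \<in> Q" "y \<in> Q"
  then obtain a b c d where "a \<in> H" "b \<in> H" "c \<in> H" "d \<in> H" "x = a - b" "y = c - d"
    unfolding qgrp_def by blast
  then have "x + y = (a + c) - (b + d)" "a + c \<in> H" "b + d \<in> H" by (auto simp: add_H algebra_simps)
  then show ?thesis unfolding qgrp_def by blast
qed
lemma Q_uminus: "x \<in> Q \<Longrightarrow> -x \<in> Q"
  unfolding qgrp_def by (auto, metis minus_diff_eq)
lemma Q_zero: "0 \<in> Q" using H_Q zero_H by auto
lemma Q_diff: "x \<in> Q \<Longrightarrow> y \<in> Q \<Longrightarrow> x - y \<in> Q"
  using Q_add[of x "-y"] Q_uminus by simp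

lemma colon_Q: "colon H X \<subseteq> Q" unfolding colon_def by auto
lemma colon_anti: "X \<subseteq> Y \<Longrightarrow> colon H Y \<subseteq> colon H X" unfolding colon_def by auto
lemma colon2: "X \<subseteq> Q \<Longrightarrow> X \<subseteq> colon H (colon H X)"
  unfolding colon_def by (auto simp: add.commute)
lemma colon3: "X \<subseteq> Q \<Longrightarrow> colon H (vclose H X) = colon H X"
  unfolding vclose_def
  by (meson colon2 colon_Q colon_anti subset_antisym)
lemma vclose_Q: "vclose H X \<subseteq> Q" unfolding vclose_def by (rule colon_Q)
lemma vclose_mono: "X \<subseteq> Y \<Longrightarrow> vclose H X \<subseteq> vclose H Y"
  unfolding vclose_def by (intro colon_anti)
lemma vclose_incr: "X \<subseteq> Q \<Longrightarrow> X \<subseteq> vclose H X"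
  unfolding vclose_def by (rule colon2)
lemma vclose_idem: "X \<subseteq> Q \<Longrightarrow> vclose H (vclose H X) = vclose H X"
  by (simp add: vclose_def colon3[unfolded vclose_def])

lemma colon_H: "colon H H = H"
proof
  show "colon H H \<subseteq> H" unfolding colon_def using zero_H by force
  show "H \<subseteq> colon H H" unfolding colon_def using H_Q add_H by auto
qed
lemma vclose_H: "vclose H H = H" by (simp add: vclose_def colon_H)

lemma tr_mem: "y \<in> tr x X \<longleftrightarrow> y - x \<in> X"
  unfolding tr_def by (auto simp: image_iff algebra_simps) (metis add.commute diff_add_cancel)

lemma colon_tr: "x \<in> Q \<Longrightarrow> colon H (tr x X) = tr (-x) (colon H X)"
proof (rule set_eqI)
  fix y assume x: "x \<in> Q"
  have "y \<in> colon H (tr x X) \<longleftrightarrow> y \<in> Q \<and> (\<forall>z\<in>X. y + (x + z) \<in> H)"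
    unfolding colon_def tr_def by auto
  moreover have "y \<in> tr (-x) (colon H X) \<longleftrightarrow> y + x \<in> Q \<and> (\<forall>z\<in>X. (y + x) + z \<in> H)"
    unfolding tr_mem colon_def by (simp add: algebra_simps)
  moreover have "y \<in> Q \<longleftrightarrow> y + x \<in> Q"
    using Q_add[OF _ x] Q_diff[OF _ x] by force
  ultimately show "y \<in> colon H (tr x X) \<longleftrightarrow> y \<in> tr (-x) (colon H X)"
    by (simp add: add.assoc)
qed

lemma vclose_tr: "x \<in> Q \<Longrightarrow> vclose H (tr x X) = tr x (vclose H X)"
  unfolding vclose_def using colon_tr Q_uminus by simp

lemma tr_Q: "x \<in> Q \<Longrightarrow> X \<subseteq> Q \<Longrightarrow> tr x X \<subseteq> Q"
  unfolding tr_def using Q_add by auto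
lemma tr_tr: "tr x (tr y X) = tr (x + y) X"
  unfolding tr_def by (auto simp: image_image add.assoc)
lemma tr_0: "tr 0 X = X" unfolding tr_def by simp

lemma mplus_comm: "mplus X Y = mplus Y X" unfolding mplus_def by (auto; metis add.commute)
lemma mplus_assoc: "mplus (mplus X Y) Z = mplus X (mplus Y Z)"
proof (rule set_eqI)
  fix z show "z \<in> mplus (mplus X Y) Z \<longleftrightarrow> z \<in> mplus X (mplus Y Z)"
    unfolding mplus_def
    apply (rule iffI)
     apply (clarsimp, metis add.assoc)
    apply (clarsimp, metis add.assoc)
    done
qed
lemma mplus_mono: "X \<subseteq> X' \<Longrightarrow> Y \<subseteq> Y' \<Longrightarrow> mplus X Y \<subseteq> mplus X' Y'"
  unfolding mplus_def by auto
lemma mplus_Q: "X \<subseteq> Q \<Longrightarrow> Y \<subseteq> Q \<Longrightarrow> mplus X Y \<subseteq> Q"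
  unfolding mplus_def using Q_add by blast
lemma mplus_HH: "X \<subseteq> H \<Longrightarrow> Y \<subseteq> H \<Longrightarrow> mplus X Y \<subseteq> H"
  unfolding mplus_def using add_H by blast
lemma mplus_tr: "mplus (tr t X) Y = tr t (mplus X Y)"
proof (rule set_eqI)
  fix z show "z \<in> mplus (tr t X) Y \<longleftrightarrow> z \<in> tr t (mplus X Y)"
  proof
    assume "z \<in> mplus (tr t X) Y"
    then obtain x y where "x \<in> X" "y \<in> Y" "z = (t + x) + y" unfolding mplus_def tr_def by blast
    then show "z \<in> tr t (mplus X Y)" unfolding mplus_def tr_def by (auto simp: add.assoc)
  next
    assume "z \<in> tr t (mplus X Y)"
    then obtain x y where "x \<in> X" "y \<in> Y" "z = t + (x + y)" unfolding mplus_def tr_def by blast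
    then show "z \<in> mplus (tr t X) Y" unfolding mplus_def tr_def
      by (auto simp: add.assoc[symmetric])
  qed
qed
lemma mplus_empty: "X \<noteq> {} \<Longrightarrow> Y \<noteq> {} \<Longrightarrow> mplus X Y \<noteq> {}"
  unfolding mplus_def by blast
lemma mplus_0: "0 \<in> Y \<Longrightarrow> X \<subseteq> mplus X Y"
proof
  fix x assume "0 \<in> Y" "x \<in> X"
  then show "x \<in> mplus X Y" unfolding mplus_def by (metis (mono_tags, lifting) add_0_right mem_Collect_eq)
qed

lemma colon_mplus: "X \<subseteq> Q \<Longrightarrow> y \<in> colon H (mplus X Z) \<longleftrightarrow> y \<in> Q \<and> (\<forall>x\<in>X. y + x \<in> colon H Z)"
  unfolding colon_def mplus_def using Q_add by (auto simp: add.assoc) blast+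

lemma vclose_mplus_vclose: "X \<subseteq> Q \<Longrightarrow> Y \<subseteq> Q \<Longrightarrow> vclose H (mplus X (vclose H Y)) = vclose H (mplus X Y)"
proof -
  assume X: "X \<subseteq> Q" and Y: "Y \<subseteq> Q"
  have "colon H (mplus X (vclose H Y)) = colon H (mplus X Y)"
    using colon_mplus[OF X] colon3[OF Y] by blast
  then show ?thesis unfolding vclose_def by simp
qed

lemma colon_mplus_H: "colon H (mplus H X) = colon H X"
proof (rule set_eqI)
  fix y
  show "y \<in> colon H (mplus H X) \<longleftrightarrow> y \<in> colon H X"
    unfolding colon_def mplus_def
    apply (rule iffI)
     apply clarsimp
     apply (metis add_0 zero_H)
    apply clarsimp
    apply (metis add.left_commute add_H)
    done
qed
lemma vclose_mplus_H: "vclose H (mplus H X) = vclose H X"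
  unfolding vclose_def by (simp add: colon_mplus_H)

definition vm :: "'a set \<Rightarrow> 'a set \<Rightarrow> 'a set" where
  "vm X Y = vclose H (mplus (X \<inter> Q) (Y \<inter> Q))"

lemma vm_Q: "vm X Y \<subseteq> Q" unfolding vm_def by (rule vclose_Q)
lemma vm_comm: "vm X Y = vm Y X" unfolding vm_def by (simp add: mplus_comm)
lemma vm_assoc: "vm (vm X Y) Z = vm X (vm Y Z)"
proof -
  have q: "vm X Y \<inter> Q = vm X Y" "vm Y Z \<inter> Q = vm Y Z" using vm_Q by auto
  have "vm (vm X Y) Z = vclose H (mplus (Z \<inter> Q) (vclose H (mplus (X \<inter> Q) (Y \<inter> Q))))"
    unfolding vm_def[of "vm X Y"] q by (simp add: mplus_comm vm_def)
  also have "\<dots> = vclose H (mplus (Z \<inter> Q) (mplus (X \<inter> Q) (Y \<inter> Q)))"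
    by (rule vclose_mplus_vclose) (use mplus_Q[of "X \<inter> Q" "Y \<inter> Q"] in auto)
  also have "\<dots> = vclose H (mplus (X \<inter> Q) (mplus (Y \<inter> Q) (Z \<inter> Q)))"
    by (metis mplus_assoc mplus_comm)
  also have "\<dots> = vclose H (mplus (X \<inter> Q) (vclose H (mplus (Y \<inter> Q) (Z \<inter> Q))))"
    by (rule vclose_mplus_vclose[symmetric]) (use mplus_Q[of "Y \<inter> Q" "Z \<inter> Q"] in auto)
  also have "\<dots> = vm X (vm Y Z)" unfolding vm_def[of X "vm Y Z"] q by (simp add: vm_def)
  finally show ?thesis .
qed
lemma vm_lcomm: "vm X (vm Y Z) = vm Y (vm X Z)"
  by (metis vm_assoc vm_comm)

lemma vm_H: "X \<subseteq> Q \<Longrightarrow> vm H X = vclose H X"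
  unfolding vm_def using H_Q by (simp add: Int_absorb2 vclose_mplus_H)

lemma vm_mono: "X \<subseteq> X' \<Longrightarrow> Y \<subseteq> Y' \<Longrightarrow> vm X Y \<subseteq> vm X' Y'"
  unfolding vm_def by (intro vclose_mono mplus_mono) auto

lemma vm_tr: "t \<in> Q \<Longrightarrow> X \<subseteq> Q \<Longrightarrow> vm (tr t X) Y = tr t (vm X Y)"
proof -
  assume t: "t \<in> Q" and X: "X \<subseteq> Q"
  have "tr t X \<inter> Q = tr t X" using tr_Q[OF t X] by auto
  then show ?thesis unfolding vm_def using X t
    by (simp add: Int_absorb2 mplus_tr vclose_tr)
qed

lemma group_prop:
  assumes A: "A \<subseteq> H" "A \<noteq> {}"
  shows "vclose H (mplus A (colon H A)) = H"
proof -
  let ?C = "colon H A"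
  have "colon H (mplus A ?C) = H"
  proof
    show "H \<subseteq> colon H (mplus A ?C)"
    proof
      fix h assume h: "h \<in> H"
      have "\<forall>z\<in>mplus A ?C. h + z \<in> H"
        unfolding mplus_def colon_def using A h add_H by (auto simp: add.commute)
      then show "h \<in> colon H (mplus A ?C)" unfolding colon_def[of H "mplus A ?C"] using h H_Q by auto
    qed
    show "colon H (mplus A ?C) \<subseteq> H"
    proof
      fix x assume x: "x \<in> colon H (mplus A ?C)"
      then have xQ: "x \<in> Q" and xh: "\<And>a c. a \<in> A \<Longrightarrow> c \<in> ?C \<Longrightarrow> x + (a + c) \<in> H"
        unfolding colon_def mplus_def by auto
      have nC: "nmul n x \<in> ?C" for n
      proof (induction n)
        case 0 then show ?case using Q_zero A unfolding colon_def by auto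
      next
        case (Suc n)
        have "nmul n x \<in> Q" using Suc colon_Q by auto
        then have "x + nmul n x \<in> Q" using Q_add xQ by auto
        moreover have "\<forall>a\<in>A. x + nmul n x + a \<in> H"
          using xh[OF _ Suc] by (simp add: algebra_simps)
        ultimately show ?case unfolding colon_def by simp
      qed
      obtain a0 where a0: "a0 \<in> A" using A by auto
      have "\<forall>n\<ge>1. a0 + nmul n x \<in> H" using nC a0 unfolding colon_def by (auto simp: add.commute)
      then show "x \<in> H" using K xQ a0 A unfolding krull_monoid_def completely_integrally_closed_def
        by blast
    qed
  qed
  then show ?thesis unfolding vclose_def by (simp add: colon_H)
qed

definition dset :: "'a set \<Rightarrow> bool" where
  "dset A \<longleftrightarrow> A \<subseteq> H \<and> A \<noteq> {} \<and> vclose H A = A"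

lemma dset_H: "dset H" unfolding dset_def using zero_H vclose_H by auto
lemma dset_Q: "dset A \<Longrightarrow> A \<subseteq> Q" unfolding dset_def using H_Q by auto

lemma vclose_ideal: "x \<in> vclose H X \<Longrightarrow> h \<in> H \<Longrightarrow> x + h \<in> vclose H X"
proof -
  assume x: "x \<in> vclose H X" and h: "h \<in> H"
  then have xQ: "x \<in> Q" and xx: "\<And>y. y \<in> colon H X \<Longrightarrow> x + y \<in> H"
    unfolding vclose_def colon_def by auto
  have "x + h \<in> Q" using Q_add xQ h H_Q by auto
  moreover have "\<And>y. y \<in> colon H X \<Longrightarrow> x + h + y \<in> H"
    using xx h add_H by (metis add.commute add.left_commute)
  ultimately show ?thesis unfolding vclose_def colon_def[of H "colon H X"] by simp
qed

lemma dset_ideal: "dset A \<Longrightarrow> a \<in> A \<Longrightarrow> h \<in> H \<Longrightarrow> a + h \<in> A"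
  unfolding dset_def by (metis vclose_ideal)

lemma dset_vm: "dset A \<Longrightarrow> dset B \<Longrightarrow> dset (vm A B)"
proof -
  assume A: "dset A" and B: "dset B"
  have AQ: "A \<inter> Q = A" "B \<inter> Q = B" using A B dset_Q by auto
  have "mplus A B \<subseteq> H" using A B unfolding dset_def by (intro mplus_HH) auto
  then have "vm A B \<subseteq> H" unfolding vm_def AQ using vclose_mono vclose_H by blast
  moreover have "mplus A B \<noteq> {}" using A B unfolding dset_def by (intro mplus_empty) auto
  then have "vm A B \<noteq> {}" unfolding vm_def AQ
    using vclose_incr[of "mplus A B"] mplus_Q A B dset_Q by blast
  moreover have "vclose H (vm A B) = vm A B" unfolding vm_def AQ
    by (rule vclose_idem) (use A B dset_Q mplus_Q in auto)
  ultimately show ?thesis unfolding dset_def by auto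
qed

lemma vm_sub: "dset A \<Longrightarrow> B \<subseteq> H \<Longrightarrow> vm A B \<subseteq> A"
proof -
  assume A: "dset A" and B: "B \<subseteq> H"
  have "mplus (A \<inter> Q) (B \<inter> Q) \<subseteq> A" unfolding mplus_def using dset_ideal[OF A] B by auto
  then show ?thesis unfolding vm_def using A unfolding dset_def by (metis vclose_mono)
qed

lemma vm_H_dset: "dset A \<Longrightarrow> vm H A = A"
  using vm_H dset_Q unfolding dset_def by auto

lemma vm_colon: "dset A \<Longrightarrow> vm (colon H A) A = H"
proof -
  assume A: "dset A"
  have "vm (colon H A) A = vclose H (mplus A (colon H A))"
    unfolding vm_def using colon_Q dset_Q[OF A] by (simp add: Int_absorb2 mplus_comm)
  then show ?thesis using group_prop A unfolding dset_def by simp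
qed

lemma cancel:
  assumes A: "dset A" and X: "X \<subseteq> Q" and Y: "Y \<subseteq> Q" and e: "vm A X = vm A Y"
  shows "vclose H X = vclose H Y"
proof -
  have "vm (colon H A) (vm A X) = vm (vm (colon H A) A) X" by (simp add: vm_assoc)
  also have "\<dots> = vclose H X" using vm_colon[OF A] vm_H[OF X] by simp
  finally have 1: "vm (colon H A) (vm A X) = vclose H X" .
  have "vm (colon H A) (vm A Y) = vm (vm (colon H A) A) Y" by (simp add: vm_assoc)
  also have "\<dots> = vclose H Y" using vm_colon[OF A] vm_H[OF Y] by simp
  finally show ?thesis using 1 e by simp
qed

lemma cancel_dset: "dset A \<Longrightarrow> dset X \<Longrightarrow> dset Y \<Longrightarrow> vm A X = vm A Y \<Longrightarrow> X = Y"
  using cancel dset_Q unfolding dset_def by metis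

lemma dset_dvd:
  assumes A: "dset A" and B: "dset B" and AB: "A \<subseteq> B"
  shows "\<exists>C. dset C \<and> A = vm B C"
proof -
  let ?C = "vm (colon H B) A"
  have cB: "colon H B \<inter> Q = colon H B" using colon_Q by auto
  have AQ: "A \<inter> Q = A" using dset_Q[OF A] by auto
  have "mplus (colon H B) A \<subseteq> H"
    unfolding mplus_def colon_def using AB by (auto simp: add.commute)
  then have "?C \<subseteq> H" unfolding vm_def cB AQ using vclose_mono vclose_H by blast
  moreover have "0 \<in> colon H B" using B Q_zero unfolding colon_def dset_def by auto
  then have "A \<subseteq> mplus (colon H B) A" by (subst mplus_comm) (rule mplus_0)
  then have "A \<subseteq> ?C" unfolding vm_def cB AQ
    using vclose_incr[of "mplus (colon H B) A"] mplus_Q colon_Q dset_Q[OF A] by blast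
  then have "?C \<noteq> {}" using A unfolding dset_def by auto
  moreover have "vclose H ?C = ?C" unfolding vm_def
    by (rule vclose_idem) (use mplus_Q[of "colon H B \<inter> Q" "A \<inter> Q"] in auto)
  ultimately have "dset ?C" unfolding dset_def by auto
  moreover have "vm B ?C = A"
  proof -
    have "vm B ?C = vm (vm (colon H B) B) A" by (metis vm_assoc vm_comm)
    also have "\<dots> = A" using vm_colon[OF B] vm_H_dset[OF A] by simp
    finally show ?thesis .
  qed
  ultimately show ?thesis by auto
qed

lemma tr_mono: "X \<subseteq> Y \<Longrightarrow> tr x X \<subseteq> tr x Y" unfolding tr_def by auto

end



context krull
begin

lemma dset_divisorial: "dset A \<Longrightarrow> divisorial_ideal H A"
  unfolding divisorial_ideal_def s_ideal_def using dset_ideal by (auto simp: dset_def)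

lemma prime_dset: "prime_divisor H P \<Longrightarrow> dset P"
  unfolding prime_divisor_def divisorial_ideal_def s_ideal_def dset_def by auto

lemma prime_neH: "prime_divisor H P \<Longrightarrow> P \<noteq> H"
  unfolding prime_divisor_def prime_ideal_def by auto

lemma prime_prop: "prime_divisor H P \<Longrightarrow> a \<in> H \<Longrightarrow> b \<in> H \<Longrightarrow> a + b \<in> P \<Longrightarrow> a \<in> P \<or> b \<in> P"
  unfolding prime_divisor_def prime_ideal_def by auto

lemma max_prime:
  assumes P: "dset P" "P \<noteq> H" and mx: "\<And>B. dset B \<Longrightarrow> P \<subseteq> B \<Longrightarrow> B \<noteq> H \<Longrightarrow> B = P"
  shows "prime_divisor H P"
proof -
  have "a \<in> P \<or> b \<in> P" if a: "a \<in> H" and b: "b \<in> H" and ab: "a + b \<in> P" for a b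
  proof (rule ccontr)
    assume na: "\<not> (a \<in> P \<or> b \<in> P)"
    let ?X = "P \<union> tr a H"
    let ?B = "vclose H ?X"
    have XH: "?X \<subseteq> H" using P a add_H unfolding dset_def tr_def by auto
    have XQ: "?X \<subseteq> Q" using XH H_Q by auto
    have BH: "?B \<subseteq> H" using vclose_mono[OF XH] vclose_H by simp
    have PB: "P \<subseteq> ?B" using vclose_incr[OF XQ] by auto
    have aB: "a \<in> ?B" using vclose_incr[OF XQ] zero_H unfolding tr_def by force
    have "dset ?B" unfolding dset_def using BH PB P vclose_idem[OF XQ] unfolding dset_def by auto
    then have "?B = H" using mx PB aB na by blast
    have bQ: "b \<in> Q" using b H_Q by auto
    have "tr b ?X \<subseteq> P"
    proof
      fix z assume "z \<in> tr b ?X"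
      then obtain w where w: "w \<in> ?X" "z = b + w" unfolding tr_def by auto
      show "z \<in> P"
      proof (cases "w \<in> P")
        case True then show ?thesis using w dset_ideal[OF P(1) True b] by (simp add: add.commute)
      next
        case False
        then obtain h where h: "h \<in> H" "w = a + h" using w unfolding tr_def by auto
        then have "z = (a + b) + h" using w by (simp add: algebra_simps)
        then show ?thesis using dset_ideal[OF P(1) ab h(1)] by simp
      qed
    qed
    then have "vclose H (tr b ?X) \<subseteq> P" using vclose_mono P unfolding dset_def by metis
    then have "tr b ?B \<subseteq> P" using vclose_tr[OF bQ] by simp
    moreover have "b \<in> tr b ?B" using \<open>?B = H\<close> zero_H unfolding tr_def by force
    ultimately show False using na by auto
  qed
  then show ?thesis
    unfolding prime_divisor_def prime_ideal_def using P dset_divisorial[OF P(1)]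
    unfolding divisorial_ideal_def dset_def by auto
qed

lemma prime_vm:
  assumes P: "prime_divisor H P" and B: "dset B" and C: "dset C" and sub: "vm B C \<subseteq> P"
  shows "B \<subseteq> P \<or> C \<subseteq> P"
proof -
  have "mplus B C \<subseteq> vm B C" unfolding vm_def using dset_Q[OF B] dset_Q[OF C]
    by (simp add: Int_absorb2 mplus_Q vclose_incr)
  then have bc: "b + c \<in> P" if "b \<in> B" "c \<in> C" for b c using sub that unfolding mplus_def by blast
  show ?thesis
  proof (rule ccontr)
    assume "\<not> ?thesis"
    then obtain b c where "b \<in> B" "b \<notin> P" "c \<in> C" "c \<notin> P" by auto
    then show False using prime_prop[OF P, of b c] bc B C unfolding dset_def by auto
  qed
qed

lemma prime_sub:
  assumes P: "prime_divisor H P" and R: "prime_divisor H R" and RP: "R \<subseteq> P"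
  shows "R = P"
proof -
  obtain C where C: "dset C" "R = vm P C" using dset_dvd[OF prime_dset[OF R] prime_dset[OF P] RP] by auto
  have "P \<subseteq> R \<or> C \<subseteq> R" using prime_vm[OF R prime_dset[OF P] C(1)] C(2) by simp
  then show ?thesis
  proof
    assume "P \<subseteq> R" then show ?thesis using RP by auto
  next
    assume CR: "C \<subseteq> R"
    have "R \<subseteq> C" using C vm_sub[OF C(1), of P] prime_dset[OF P] unfolding dset_def
      by (simp add: vm_comm)
    then have "C = R" using CR by auto
    then have "vm R P = vm R H" using C vm_comm vm_H_dset[OF prime_dset[OF R]] by metis
    then have "vclose H P = vclose H H"
      using cancel[OF prime_dset[OF R]] dset_Q[OF prime_dset[OF P]] H_Q by blast
    then show ?thesis using prime_dset[OF P] prime_neH[OF P] vclose_H unfolding dset_def by auto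
  qed
qed

definition vprodm :: "'a set multiset \<Rightarrow> 'a set" where
  "vprodm M = fold_mset vm H M"

lemma cfc: "comp_fun_commute vm"
  unfolding comp_fun_commute_def by (auto simp: fun_eq_iff vm_lcomm)

lemma vprodm_empty[simp]: "vprodm {#} = H" unfolding vprodm_def by simp
lemma vprodm_add[simp]: "vprodm (add_mset P M) = vm P (vprodm M)"
  unfolding vprodm_def by (rule comp_fun_commute.fold_mset_add_mset[OF cfc])

definition pm :: "'a set multiset \<Rightarrow> bool" where
  "pm M \<longleftrightarrow> (\<forall>P\<in>#M. prime_divisor H P)"

lemma dset_vprodm: "pm M \<Longrightarrow> dset (vprodm M)"
  by (induction M) (auto simp: pm_def dset_H intro: dset_vm prime_dset)

lemma vprodm_union: "pm M \<Longrightarrow> vprodm (M + N) = vm (vprodm M) (vprodm N)"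
proof (induction N)
  case empty then show ?case using vm_H_dset[OF dset_vprodm] by (simp add: vm_comm)
next
  case (add x N) then show ?case by (simp add: vm_lcomm)
qed

lemma vprodm_sub: "pm M \<Longrightarrow> P \<in># M \<Longrightarrow> vprodm M \<subseteq> P"
proof -
  assume M: "pm M" and P: "P \<in># M"
  then have "M = add_mset P (M - {#P#})" by simp
  then have "vprodm M = vm P (vprodm (M - {#P#}))" by (metis vprodm_add)
  moreover have "pm (M - {#P#})" using M unfolding pm_def by (meson in_diffD)
  ultimately show ?thesis using vm_sub[OF prime_dset] M P dset_vprodm unfolding pm_def dset_def
    by metis
qed

lemma vprodm_in_prime: "prime_divisor H P \<Longrightarrow> pm M \<Longrightarrow> vprodm M \<subseteq> P \<Longrightarrow> P \<in># M"
proof (induction M)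
  case empty then show ?case using prime_neH[OF empty(1)] prime_dset[OF empty(1)] unfolding dset_def by auto
next
  case (add R M)
  have R: "prime_divisor H R" and M: "pm M" using add.prems unfolding pm_def by auto
  have "R \<subseteq> P \<or> vprodm M \<subseteq> P"
    using prime_vm[OF add.prems(1) prime_dset[OF R] dset_vprodm[OF M]] add.prems(3) by simp
  then show ?case
  proof
    assume "R \<subseteq> P" then show ?thesis using prime_sub[OF add.prems(1) R] by simp
  next
    assume "vprodm M \<subseteq> P" then show ?thesis using add.IH[OF add.prems(1) M] by simp
  qed
qed

lemma vprodm_unique: "pm M \<Longrightarrow> pm N \<Longrightarrow> vprodm M = vprodm N \<Longrightarrow> M = N"
proof (induction M arbitrary: N)
  case empty
  show ?case
  proof (rule ccontr)
    assume "{#} \<noteq> N"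
    then obtain P where P: "P \<in># N" by (metis multiset_nonemptyE)
    then have "vprodm N \<subseteq> P" using vprodm_sub empty by blast
    have "prime_divisor H P" using empty(2) P unfolding pm_def by auto
    then show False using empty \<open>vprodm N \<subseteq> P\<close> prime_neH[of P] prime_dset[of P] unfolding dset_def by auto
  qed
next
  case (add P M)
  have P: "prime_divisor H P" and M: "pm M" using add.prems unfolding pm_def by auto
  have "vprodm N \<subseteq> P" using vprodm_sub[OF add.prems(1)] add.prems(3) by (metis union_single_eq_member)
  then have PN: "P \<in># N" using vprodm_in_prime[OF P add.prems(2)] by simp
  then have N: "N = add_mset P (N - {#P#})" by simp
  have N': "pm (N - {#P#})" using add.prems(2) unfolding pm_def by (meson in_diffD)
  have "vm P (vprodm M) = vm P (vprodm (N - {#P#}))" using add.prems(3) N by (metis vprodm_add)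
  then have "vprodm M = vprodm (N - {#P#})"
    using cancel_dset[OF prime_dset[OF P] dset_vprodm[OF M] dset_vprodm[OF N']] by simp
  then have "M = N - {#P#}" using add.IH[OF M N'] by simp
  then show ?case using N by simp
qed

definition Rel :: "('a set \<times> 'a set) set" where
  "Rel = {(B, A). dset A \<and> dset B \<and> A \<subset> B}"

lemma wf_Rel: "wf Rel"
proof (rule ccontr)
  assume "\<not> wf Rel"
  then obtain f where f: "\<And>i. (f (Suc i), f i) \<in> Rel"
    by (auto simp: wf_iff_no_infinite_down_chain)
  have d: "\<forall>n. divisorial_ideal H (f n)"
  proof
    fix n show "divisorial_ideal H (f n)" using f[of n] dset_divisorial by (simp add: Rel_def)
  qed
  have c: "\<forall>n. f n \<subseteq> f (Suc n)"
  proof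
    fix n show "f n \<subseteq> f (Suc n)" using f[of n] by (simp add: Rel_def less_imp_le)
  qed
  have vn: "v_noetherian H" using K unfolding krull_monoid_def by simp
  have imp: "(\<forall>n. divisorial_ideal H (f n)) \<and> (\<forall>n. f n \<subseteq> f (Suc n)) \<longrightarrow> (\<exists>m. \<forall>n\<ge>m. f n = f m)"
    using vn unfolding v_noetherian_def by (rule spec)
  obtain m where "\<forall>n\<ge>m. f n = f m" using mp[OF imp conjI[OF d c]] by (elim exE)
  then have "f (Suc m) = f m" by (drule_tac spec[of _ "Suc m"]) simp
  then show False using f[of m] by (simp add: Rel_def)
qed

lemma factor_exists: "dset A \<Longrightarrow> \<exists>M. pm M \<and> vprodm M = A"
proof (induction A rule: wf_induct_rule[OF wf_Rel])
  case (1 A)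
  show ?case
  proof (cases "A = H")
    case True then show ?thesis by (intro exI[of _ "{#}"]) (simp add: pm_def)
  next
    case False
    let ?S = "{B. dset B \<and> A \<subseteq> B \<and> B \<noteq> H}"
    have "A \<in> ?S" using 1 False by auto
    then obtain P where P: "P \<in> ?S" and Pm: "\<And>B. (B, P) \<in> Rel \<Longrightarrow> B \<notin> ?S"
      using wfE_min[OF wf_Rel \<open>A \<in> ?S\<close>] by blast
    have mx: "B = P" if "dset B" "P \<subseteq> B" "B \<noteq> H" for B
      using Pm[of B] that P unfolding Rel_def by auto
    have Pp: "prime_divisor H P" using max_prime[of P] P mx by auto
    obtain C where C: "dset C" "A = vm P C" using dset_dvd[OF 1(2) prime_dset[OF Pp]] P by auto
    have AC: "A \<subseteq> C" using vm_sub[OF C(1), of P] prime_dset[OF Pp] C(2)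
      unfolding dset_def by (simp add: vm_comm)
    have "A \<noteq> C"
    proof
      assume "A = C"
      then have "vm C P = vm C H" using C vm_comm vm_H_dset by metis
      then have "vclose H P = vclose H H"
        using cancel[OF C(1)] dset_Q[OF prime_dset[OF Pp]] H_Q by blast
      then show False using prime_dset[OF Pp] prime_neH[OF Pp] vclose_H unfolding dset_def by auto
    qed
    then have "(C, A) \<in> Rel" using AC C 1(2) unfolding Rel_def by auto
    then obtain M where "pm M" "vprodm M = C" using 1(1) C(1) by blast
    then show ?thesis using Pp C(2) by (intro exI[of _ "add_mset P M"]) (auto simp: pm_def)
  qed
qed

end



context krull
begin

lemma mplus_HH_eq: "mplus H H = H"
  using mplus_HH[of H H] mplus_0[of H H] zero_H by auto

lemma dset_tr: "a \<in> H \<Longrightarrow> dset (tr a H)"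
proof -
  assume a: "a \<in> H"
  have "tr a H \<subseteq> H" unfolding tr_def using a add_H by auto
  moreover have "vclose H (tr a H) = tr a H" using vclose_tr[of a H] a H_Q vclose_H by auto
  ultimately show ?thesis unfolding dset_def tr_def using zero_H by auto
qed

definition fac :: "'a \<Rightarrow> 'a set multiset" where
  "fac a = (THE M. pm M \<and> vprodm M = tr a H)"

lemma fac_prop: "a \<in> H \<Longrightarrow> pm (fac a) \<and> vprodm (fac a) = tr a H"
proof -
  assume a: "a \<in> H"
  obtain M where M: "pm M" "vprodm M = tr a H" using factor_exists[OF dset_tr[OF a]] by auto
  show ?thesis unfolding fac_def
    by (rule theI[of _ M]) (use M vprodm_unique in auto)
qed

lemma fac_eq: "a \<in> H \<Longrightarrow> pm M \<Longrightarrow> vprodm M = tr a H \<Longrightarrow> fac a = M"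
  using fac_prop vprodm_unique by metis

lemma vm_trH: "a \<in> H \<Longrightarrow> b \<in> H \<Longrightarrow> vm (tr a H) (tr b H) = tr (a + b) H"
proof -
  assume a: "a \<in> H" and b: "b \<in> H"
  have aQ: "a \<in> Q" and bQ: "b \<in> Q" using a b H_Q by auto
  have "vm (tr a H) (tr b H) = tr a (vm H (tr b H))" using vm_tr[OF aQ H_Q] by simp
  also have "\<dots> = tr a (vm (tr b H) H)" by (simp add: vm_comm)
  also have "\<dots> = tr a (tr b (vm H H))" using vm_tr[OF bQ H_Q] by simp
  also have "vm H H = H" using vm_H_dset[OF dset_H] .
  finally show ?thesis by (simp add: tr_tr)
qed

lemma fac_add: "a \<in> H \<Longrightarrow> b \<in> H \<Longrightarrow> fac (a + b) = fac a + fac b"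
proof -
  assume a: "a \<in> H" and b: "b \<in> H"
  have p: "pm (fac a + fac b)" using fac_prop[OF a] fac_prop[OF b] unfolding pm_def by auto
  have "vprodm (fac a + fac b) = tr (a + b) H"
    using vprodm_union[of "fac a" "fac b"] fac_prop[OF a] fac_prop[OF b] vm_trH[OF a b] by simp
  then show ?thesis using fac_eq[OF add_H[OF a b] p] by simp
qed

lemma fac_zero: "fac 0 = {#}"
  using fac_eq[OF zero_H, of "{#}"] by (simp add: pm_def tr_0)

lemma fac_assoc:
  assumes a: "a \<in> H" and b: "b \<in> H" and e: "fac a = fac b"
  shows "\<exists>u. unit_of H u \<and> b = a + u"
proof -
  have t: "tr a H = tr b H" using fac_prop[OF a] fac_prop[OF b] e by simp
  have "b \<in> tr b H" using zero_H unfolding tr_def by force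
  then have u: "b - a \<in> H" using t tr_mem by blast
  have "a \<in> tr a H" using zero_H unfolding tr_def by force
  then have v: "a - b \<in> H" using t tr_mem by blast
  have "unit_of H (b - a)" unfolding unit_of_def using u v by (intro conjI bexI[of _ "a - b"]) auto
  then show ?thesis by (intro exI[of _ "b - a"]) auto
qed

lemma unit_iff: "a \<in> H \<Longrightarrow> unit_of H a \<longleftrightarrow> fac a = {#}"
proof
  assume a: "a \<in> H" and u: "unit_of H a"
  then obtain v where v: "v \<in> H" "a + v = 0" unfolding unit_of_def by auto
  have "tr a H = H"
  proof
    show "tr a H \<subseteq> H" using a add_H unfolding tr_def by auto
    show "H \<subseteq> tr a H"
    proof
      fix h assume h: "h \<in> H"
      have "h = a + (v + h)" using v by (simp add: add.assoc[symmetric])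
      then show "h \<in> tr a H" unfolding tr_def using add_H[OF v(1) h] by blast
    qed
  qed
  then show "fac a = {#}" using fac_eq[OF a, of "{#}"] by (simp add: pm_def)
next
  assume a: "a \<in> H" and f: "fac a = {#}"
  then have "tr a H = H" using fac_prop[OF a] by simp
  then have "0 \<in> tr a H" using zero_H by simp
  then have "-a \<in> H" using tr_mem[of 0 a H] by simp
  then show "unit_of H a" unfolding unit_of_def using a by (intro conjI bexI[of _ "-a"]) auto
qed

lemma nmul_H: "a \<in> H \<Longrightarrow> nmul n a \<in> H"
  by (induction n) (auto simp: zero_H add_H)

lemma fac_nmul: "a \<in> H \<Longrightarrow> fac (nmul n a) = nmul n (fac a)"
  by (induction n) (auto simp: fac_zero fac_add nmul_H)

lemma sum_list_H: "set xs \<subseteq> H \<Longrightarrow> sum_list xs \<in> H"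
  by (induction xs) (auto simp: zero_H add_H)

lemma fac_sum_list: "set xs \<subseteq> H \<Longrightarrow> fac (sum_list xs) = sum_list (map fac xs)"
  by (induction xs) (auto simp: fac_zero fac_add sum_list_H)

lemma count_nmul: "count (nmul n M) x = n * count M x"
  by (induction n) auto

section \<open>Classes\<close>

lemma cls_alt: "cls H X = {tr x X | x. x \<in> Q}"
  unfolding cls_def tr_def by simp

lemma cls_tr: "t \<in> Q \<Longrightarrow> cls H (tr t X) = cls H X"
proof -
  assume t: "t \<in> Q"
  have "{tr x (tr t X) | x. x \<in> Q} = {tr x X | x. x \<in> Q}"
  proof (intro set_eqI iffI)
    fix Y assume "Y \<in> {tr x (tr t X) | x. x \<in> Q}"
    then obtain x where "x \<in> Q" "Y = tr (x + t) X" by (auto simp: tr_tr)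
    then show "Y \<in> {tr x X | x. x \<in> Q}" using Q_add t by blast
  next
    fix Y assume "Y \<in> {tr x X | x. x \<in> Q}"
    then obtain x where x: "x \<in> Q" "Y = tr x X" by auto
    then have "Y = tr (x - t) (tr t X)" by (simp add: tr_tr)
    then show "Y \<in> {tr x (tr t X) | x. x \<in> Q}" using Q_diff x t by blast
  qed
  then show ?thesis by (simp add: cls_alt)
qed

lemma cls_self: "X \<in> cls H X"
proof -
  have "X = tr 0 X" by (simp add: tr_0)
  then show ?thesis unfolding cls_alt using Q_zero by blast
qed

lemma cls_eq_iff: "cls H X = cls H Y \<longleftrightarrow> (\<exists>t\<in>Q. X = tr t Y)"
proof
  assume "cls H X = cls H Y"
  then have "X \<in> cls H Y" using cls_self by metis
  then show "\<exists>t\<in>Q. X = tr t Y" unfolding cls_alt by auto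
next
  assume "\<exists>t\<in>Q. X = tr t Y"
  then show "cls H X = cls H Y" using cls_tr by auto
qed

lemma class_add_cls:
  assumes A: "A \<subseteq> Q" and B: "B \<subseteq> Q"
  shows "class_add H (cls H A) (cls H B) = cls H (vclose H (mplus A B))"
proof -
  have mp: "mplus (tr x A) (tr y B) = tr (x + y) (mplus A B)" for x y
    by (metis mplus_comm mplus_tr tr_tr add.commute)
  have "class_add H (cls H A) (cls H B) = {vclose H (mplus A' B') | A' B'. A' \<in> cls H A \<and> B' \<in> cls H B}"
    unfolding class_add_def mplus_def by simp
  also have "\<dots> = cls H (vclose H (mplus A B))"
  proof (intro set_eqI iffI)
    fix Z assume "Z \<in> {vclose H (mplus A' B') | A' B'. A' \<in> cls H A \<and> B' \<in> cls H B}"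
    then obtain x y where xy: "x \<in> Q" "y \<in> Q" "Z = vclose H (mplus (tr x A) (tr y B))"
      unfolding cls_alt by auto
    then have "Z = tr (x + y) (vclose H (mplus A B))" using mp vclose_tr Q_add by simp
    then show "Z \<in> cls H (vclose H (mplus A B))" unfolding cls_alt using Q_add xy by blast
  next
    fix Z assume "Z \<in> cls H (vclose H (mplus A B))"
    then obtain x where x: "x \<in> Q" "Z = tr x (vclose H (mplus A B))" unfolding cls_alt by auto
    then have "Z = vclose H (mplus (tr x A) (tr 0 B))" using mp vclose_tr by simp
    moreover have "tr x A \<in> cls H A" "tr 0 B \<in> cls H B" unfolding cls_alt using x Q_zero by auto
    ultimately show "Z \<in> {vclose H (mplus A' B') | A' B'. A' \<in> cls H A \<and> B' \<in> cls H B}" by blast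
  qed
  finally show ?thesis .
qed

definition rep :: "'a set set \<Rightarrow> 'a set" where
  "rep g = (SOME P. prime_divisor H P \<and> cls H P = g)"

lemma rep_prop: "g \<in> G0 H \<Longrightarrow> prime_divisor H (rep g) \<and> cls H (rep g) = g"
  unfolding rep_def G0_def by (rule someI_ex) auto

lemma cls_G0: "prime_divisor H P \<Longrightarrow> cls H P \<in> G0 H"
  unfolding G0_def by auto

lemma foldr_class:
  "set xs \<subseteq> G0 H \<Longrightarrow> foldr (class_add H) xs (cls H H) = cls H (vprodm (mset (map rep xs)))"
proof (induction xs)
  case Nil then show ?case by simp
next
  case (Cons g xs)
  have g: "prime_divisor H (rep g)" "cls H (rep g) = g" using rep_prop Cons.prems by auto
  have pmx: "pm (mset (map rep xs))" using Cons.prems rep_prop unfolding pm_def by auto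
  let ?V = "vprodm (mset (map rep xs))"
  have VQ: "?V \<subseteq> Q" using dset_Q[OF dset_vprodm[OF pmx]] .
  have gQ: "rep g \<subseteq> Q" using dset_Q[OF prime_dset[OF g(1)]] .
  have "foldr (class_add H) (g # xs) (cls H H) = class_add H (cls H (rep g)) (cls H ?V)"
    using Cons g by simp
  also have "\<dots> = cls H (vclose H (mplus (rep g) ?V))" using class_add_cls[OF gQ VQ] .
  also have "vclose H (mplus (rep g) ?V) = vm (rep g) ?V"
    unfolding vm_def using gQ VQ by (simp add: Int_absorb2)
  finally show ?case by simp
qed

lemma class_sum_formula:
  assumes S: "set_mset S \<subseteq> G0 H"
  shows "class_sum H S = cls H (vprodm (image_mset rep S))"
proof -
  let ?xs = "SOME xs. mset xs = S"
  have m: "mset ?xs = S" by (rule someI_ex) (rule ex_mset)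
  then have "set ?xs \<subseteq> G0 H" using S by (metis set_mset_mset)
  then show ?thesis unfolding class_sum_def using foldr_class m by (metis mset_map)
qed

lemma vprodm_shift:
  "pm M \<Longrightarrow> (\<forall>P\<in>#M. \<exists>t\<in>Q. g P = tr t P) \<Longrightarrow> \<exists>t\<in>Q. vprodm (image_mset g M) = tr t (vprodm M)"
proof (induction M)
  case empty then show ?case using Q_zero tr_0 by (metis image_mset_empty)
next
  case (add P M)
  have P: "prime_divisor H P" and M: "pm M" using add.prems unfolding pm_def by auto
  obtain s where s: "s \<in> Q" "vprodm (image_mset g M) = tr s (vprodm M)" using add M by auto
  obtain t where t: "t \<in> Q" "g P = tr t P" using add.prems by auto
  have PQ: "P \<subseteq> Q" using dset_Q[OF prime_dset[OF P]] .
  have VQ: "vprodm M \<subseteq> Q" using dset_Q[OF dset_vprodm[OF M]] .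
  have "vprodm (image_mset g (add_mset P M)) = vm (tr t P) (tr s (vprodm M))" using s t by simp
  also have "\<dots> = tr t (vm P (tr s (vprodm M)))" using vm_tr[OF t(1) PQ] by simp
  also have "vm P (tr s (vprodm M)) = tr s (vm (vprodm M) P)" using vm_tr[OF s(1) VQ] vm_comm by metis
  finally have "vprodm (image_mset g (add_mset P M)) = tr (t + s) (vprodm (add_mset P M))"
    by (simp add: tr_tr vm_comm)
  then show ?case using Q_add[OF t(1) s(1)] by blast
qed

lemma cls_rep_vprodm: "pm M \<Longrightarrow> cls H (vprodm (image_mset rep (image_mset (cls H) M))) = cls H (vprodm M)"
proof -
  assume M: "pm M"
  have "\<forall>P\<in>#M. \<exists>t\<in>Q. (rep \<circ> cls H) P = tr t P"
  proof
    fix P assume "P \<in># M"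
    then have P: "prime_divisor H P" using M unfolding pm_def by auto
    then have "cls H (rep (cls H P)) = cls H P" using rep_prop cls_G0 by blast
    then show "\<exists>t\<in>Q. (rep \<circ> cls H) P = tr t P" using cls_eq_iff by simp
  qed
  then obtain t where "t \<in> Q" "vprodm (image_mset (rep \<circ> cls H) M) = tr t (vprodm M)"
    using vprodm_shift[OF M] by blast
  then show ?thesis using cls_tr by (simp add: image_mset.compositionality)
qed

definition beta :: "'a \<Rightarrow> 'a set set multiset" where
  "beta a = image_mset (cls H) (fac a)"

lemma class_sum_pm: "pm M \<Longrightarrow> class_sum H (image_mset (cls H) M) = cls H (vprodm M)"
proof -
  assume M: "pm M"
  have "set_mset (image_mset (cls H) M) \<subseteq> G0 H" using M cls_G0 unfolding pm_def by auto
  then show ?thesis using class_sum_formula cls_rep_vprodm[OF M] by simp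
qed

lemma beta_BG0: "a \<in> H \<Longrightarrow> beta a \<in> BG0 H"
proof -
  assume a: "a \<in> H"
  have "set_mset (beta a) \<subseteq> G0 H" using fac_prop[OF a] cls_G0 unfolding pm_def beta_def by auto
  moreover have "class_sum H (beta a) = cls H H"
    unfolding beta_def using class_sum_pm fac_prop[OF a] cls_tr a H_Q by auto
  ultimately show ?thesis unfolding BG0_def by auto
qed

lemma realize:
  assumes M: "pm M" and S: "class_sum H (image_mset (cls H) M) = cls H H"
  shows "\<exists>a\<in>H. fac a = M"
proof -
  have "cls H (vprodm M) = cls H H" using S class_sum_pm[OF M] by simp
  then obtain t where t: "t \<in> Q" "vprodm M = tr t H" using cls_eq_iff by auto
  have "t \<in> tr t H" using zero_H unfolding tr_def by force
  then have "t \<in> H" using t dset_vprodm[OF M] unfolding dset_def by auto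
  then show ?thesis using fac_eq M t by blast
qed

lemma lift: "set_mset S \<subseteq> G0 H \<Longrightarrow> pm (image_mset rep S) \<and> image_mset (cls H) (image_mset rep S) = S"
proof -
  assume S: "set_mset S \<subseteq> G0 H"
  have "pm (image_mset rep S)" using S rep_prop unfolding pm_def by auto
  moreover have "image_mset (cls H \<circ> rep) S = image_mset id S"
    by (rule image_mset_cong) (use S rep_prop in auto)
  ultimately show ?thesis by (simp add: image_mset.compositionality)
qed

lemma realize_BG0: "S \<in> BG0 H \<Longrightarrow> pm M \<Longrightarrow> image_mset (cls H) M = S \<Longrightarrow> \<exists>a\<in>H. fac a = M"
  using realize unfolding BG0_def by auto

end



context krull
begin

lemma empty_BG0: "{#} \<in> BG0 H"
  unfolding BG0_def using class_sum_formula[of "{#}"] by simp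

lemma unit_BG0: "unit_of (BG0 H) S \<longleftrightarrow> S = {#}"
  unfolding unit_of_def using empty_BG0 by auto

lemma beta_add: "a \<in> H \<Longrightarrow> b \<in> H \<Longrightarrow> beta (a + b) = beta a + beta b"
  unfolding beta_def by (simp add: fac_add)

lemma beta_empty_iff: "a \<in> H \<Longrightarrow> beta a = {#} \<longleftrightarrow> unit_of H a"
  unfolding beta_def using unit_iff by simp

lemma unit_H: "unit_of H u \<Longrightarrow> u \<in> H" unfolding unit_of_def by auto

lemma irred_iff: "r \<in> H \<Longrightarrow> irred H r \<longleftrightarrow> irred (BG0 H) (beta r)"
proof
  assume r: "r \<in> H" and ir: "irred H r"
  have nu: "beta r \<noteq> {#}" using ir r beta_empty_iff unfolding irred_def by auto
  have "unit_of (BG0 H) V \<or> unit_of (BG0 H) W"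
    if V: "V \<in> BG0 H" and W: "W \<in> BG0 H" and e: "beta r = V + W" for V W
  proof -
    obtain M1 M2 where M: "fac r = M1 + M2" "V = image_mset (cls H) M1" "W = image_mset (cls H) M2"
      using image_mset_eq_plusD[of "cls H" "fac r" V W] e unfolding beta_def by auto
    have p: "pm M1" "pm M2" using fac_prop[OF r] M(1) unfolding pm_def by auto
    obtain b where b: "b \<in> H" "fac b = M1" using realize_BG0[OF V p(1)] M(2) by auto
    obtain c where c: "c \<in> H" "fac c = M2" using realize_BG0[OF W p(2)] M(3) by auto
    have "fac (b + c) = fac r" using fac_add b c M by simp
    then obtain u where u: "unit_of H u" "r = b + c + u"
      using fac_assoc[OF add_H[OF b(1) c(1)] r] by auto
    have cu: "c + u \<in> H" using add_H c unit_H u by auto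
    have "r = b + (c + u)" using u by (simp add: add.assoc)
    then have "unit_of H b \<or> unit_of H (c + u)" using ir b cu unfolding irred_def by auto
    moreover have "fac (c + u) = fac c" using fac_add c unit_H[OF u(1)] unit_iff u by auto
    ultimately have "M1 = {#} \<or> M2 = {#}" using unit_iff b c cu by auto
    then show ?thesis using M unit_BG0 by auto
  qed
  then show "irred (BG0 H) (beta r)"
    unfolding irred_def using beta_BG0[OF r] nu unit_BG0 by auto
next
  assume r: "r \<in> H" and ib: "irred (BG0 H) (beta r)"
  have nu: "\<not> unit_of H r" using ib beta_empty_iff[OF r] unit_BG0 unfolding irred_def by auto
  have "unit_of H a \<or> unit_of H b" if a: "a \<in> H" and b: "b \<in> H" and e: "r = a + b" for a b
  proof -
    have "beta r = beta a + beta b" using e beta_add a b by simp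
    then have "unit_of (BG0 H) (beta a) \<or> unit_of (BG0 H) (beta b)"
      using ib beta_BG0 a b unfolding irred_def by auto
    then show ?thesis using unit_BG0 beta_empty_iff a b by auto
  qed
  then show "irred H r" unfolding irred_def using r nu by auto
qed

lemma irred_H: "irred H r \<Longrightarrow> r \<in> H" unfolding irred_def by auto
lemma irred_BG0: "irred (BG0 H) U \<Longrightarrow> U \<in> BG0 H" unfolding irred_def by auto

lemma assoc_H: "assoc_in H x r \<longleftrightarrow> x \<in> H \<and> r \<in> H \<and> fac x = fac r"
proof
  assume "assoc_in H x r"
  then obtain u where "x \<in> H" "r \<in> H" "unit_of H u" "r = x + u" unfolding assoc_in_def by auto
  then show "x \<in> H \<and> r \<in> H \<and> fac x = fac r" using fac_add unit_iff unit_H by auto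
next
  assume "x \<in> H \<and> r \<in> H \<and> fac x = fac r"
  then show "assoc_in H x r" unfolding assoc_in_def using fac_assoc by blast
qed

lemma assoc_BG0: "assoc_in (BG0 H) V U \<longleftrightarrow> V \<in> BG0 H \<and> U \<in> BG0 H \<and> V = U"
  unfolding assoc_in_def unit_BG0 by auto

lemma image_nmul: "image_mset f (nmul n M) = nmul n (image_mset f M)"
  by (induction n) auto

lemma image_sum_list: "image_mset f (sum_list Ms) = sum_list (map (image_mset f) Ms)"
  by (induction Ms) auto

lemma beta_nmul: "r \<in> H \<Longrightarrow> beta (nmul n r) = nmul n (beta r)"
  unfolding beta_def by (simp add: fac_nmul image_nmul)

lemma beta_sum_list: "set xs \<subseteq> H \<Longrightarrow> beta (sum_list xs) = sum_list (map beta xs)"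
  unfolding beta_def by (simp add: fac_sum_list image_sum_list comp_def)

lemma count_sum_list: "count (sum_list Ms) P = sum_list (map (\<lambda>M. count M P) Ms)"
  by (induction Ms) auto

lemma count_image_le: "count M P \<le> count (image_mset f M) (f P)"
  by (induction M) auto

lemma count_image_eq: "(\<forall>R\<in>#M. f R = f P \<longrightarrow> R = P) \<Longrightarrow> count (image_mset f M) (f P) = count M P"
  by (induction M) auto

lemma G1_unique:
  assumes g: "cls H P \<in> G1 H" and P: "prime_divisor H P" and R: "prime_divisor H R"
    and e: "cls H R = cls H P"
  shows "R = P"
proof -
  have "\<exists>!X. prime_divisor H X \<and> X \<in> cls H P" using g unfolding G1_def by auto
  moreover have "P \<in> cls H P" "R \<in> cls H P" using cls_self e by (metis)+
  ultimately show ?thesis using P R by auto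
qed

lemma not_G1:
  assumes g: "g \<in> G0 H - G1 H"
  shows "\<exists>P R. prime_divisor H P \<and> prime_divisor H R \<and> P \<noteq> R \<and> cls H P = g \<and> cls H R = g"
proof -
  obtain P where P: "prime_divisor H P" "g = cls H P" using g unfolding G0_def by auto
  have "P \<in> g" using P cls_self by auto
  have "\<not> (\<exists>!X. prime_divisor H X \<and> X \<in> g)" using g unfolding G1_def by auto
  then obtain R where R: "prime_divisor H R" "R \<in> g" "R \<noteq> P" using P \<open>P \<in> g\<close> by blast
  then obtain t where "t \<in> Q" "R = tr t P" using P unfolding cls_alt by auto
  then have "cls H R = g" using cls_tr P by simp
  then show ?thesis using P R by blast
qed

lemma list_le1:
  fixes ys :: "nat list"
  assumes "\<forall>y\<in>set ys. y \<le> 1" "sum_list ys = length ys"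
  shows "\<forall>y\<in>set ys. y = 1"
  using assms
proof (induction ys)
  case Nil then show ?case by simp
next
  case (Cons y ys)
  have "sum_list ys \<le> length ys" using Cons.prems(1)
    by (induction ys) (auto simp: add_mono)
  then have "y = 1" "sum_list ys = length ys" using Cons.prems by auto
  then show ?case using Cons by auto
qed

theorem dir_b_a:
  assumes hb1: "\<forall>U. irred (BG0 H) U \<longrightarrow> abs_irred (BG0 H) U"
    and hb2: "\<forall>U g. irred (BG0 H) U \<longrightarrow> g \<in> G0 H - G1 H \<longrightarrow> count U g \<le> 1"
    and ir: "irred H r"
  shows "abs_irred H r"
proof -
  have r: "r \<in> H" using irred_H[OF ir] .
  have ib: "irred (BG0 H) (beta r)" using irred_iff[OF r] ir by simp
  have ab: "abs_irred (BG0 H) (beta r)" using hb1 ib by auto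
  have "length xs = n \<and> (\<forall>x\<in>set xs. assoc_in H x r)"
    if n: "n \<ge> 1" and xs: "\<forall>x\<in>set xs. irred H x" and s: "sum_list xs = nmul n r" for n xs
  proof -
    have xsH: "set xs \<subseteq> H" using xs irred_H by auto
    have bx: "\<forall>V\<in>set (map beta xs). irred (BG0 H) V" using xs xsH irred_iff by auto
    have "sum_list (map beta xs) = nmul n (beta r)"
      using beta_sum_list[OF xsH] s beta_nmul[OF r] by simp
    then have "length (map beta xs) = n \<and> (\<forall>V\<in>set (map beta xs). assoc_in (BG0 H) V (beta r))"
      using ab n bx unfolding abs_irred_def by blast
    then have L: "length xs = n" and A: "\<forall>x\<in>set xs. beta x = beta r"
      unfolding assoc_BG0 by auto
    have "fac x = fac r" if x: "x \<in> set xs" for x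
    proof (rule multiset_eqI)
      fix P
      show "count (fac x) P = count (fac r) P"
      proof (cases "prime_divisor H P")
        case False
        then show ?thesis using fac_prop xsH x r unfolding pm_def
          by (metis count_eq_zero_iff subsetD)
      next
        case P: True
        let ?g = "cls H P"
        have pmx: "pm (fac y)" if "y \<in> set xs" for y using fac_prop xsH that by auto
        have pmr: "pm (fac r)" using fac_prop r by auto
        show ?thesis
        proof (cases "?g \<in> G1 H")
          case True
          have ce: "count (fac y) P = count (beta y) ?g" if "y \<in> H" for y
            unfolding beta_def
            by (rule count_image_eq[symmetric]) (use G1_unique[OF True P] fac_prop[OF that] in \<open>auto simp: pm_def\<close>)
          then show ?thesis using A x xsH r by auto
        next
          case False
          then have gG: "?g \<in> G0 H - G1 H" using cls_G0[OF P] by auto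
          have le1: "count (beta r) ?g \<le> 1" using hb2 ib gG by auto
          have cx: "count (fac y) P \<le> 1" if "y \<in> set xs" for y
            using count_image_le[of "fac y" P "cls H"] A that le1 unfolding beta_def by auto
          have cr: "count (fac r) P \<le> 1"
            using count_image_le[of "fac r" P "cls H"] le1 unfolding beta_def by auto
          let ?ys = "map (\<lambda>y. count (fac y) P) xs"
          have "sum_list ?ys = count (fac (sum_list xs)) P"
            using fac_sum_list[OF xsH] count_sum_list[of "map fac xs" P] by (simp add: comp_def)
          also have "\<dots> = n * count (fac r) P" using s fac_nmul[OF r] count_nmul by simp
          finally have sy: "sum_list ?ys = n * count (fac r) P" .
          show ?thesis
          proof (cases "count (fac r) P = 0")
            case True
            then have "sum_list ?ys = 0" using sy by simp
            then have "count (fac x) P = 0" using x by (simp add: sum_list_eq_0_iff)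
            then show ?thesis using True by simp
          next
            case False
            then have c1: "count (fac r) P = 1" using cr by linarith
            have "sum_list ?ys = length ?ys" using sy c1 L by simp
            moreover have "\<forall>y\<in>set ?ys. y \<le> 1" using cx by auto
            ultimately have "\<forall>y\<in>set ?ys. y = 1" using list_le1 by blast
            then show ?thesis using x c1 by auto
          qed
        qed
      qed
    qed
    then show ?thesis using L assoc_H xsH r by auto
  qed
  then show ?thesis unfolding abs_irred_def using ir by auto
qed

end



context krull
begin

definition lf :: "'a set set multiset \<Rightarrow> 'a" where
  "lf V = (SOME a. a \<in> H \<and> fac a = image_mset rep V)"

lemma lf_prop: "V \<in> BG0 H \<Longrightarrow> lf V \<in> H \<and> fac (lf V) = image_mset rep V \<and> beta (lf V) = V"
proof -
  assume V: "V \<in> BG0 H"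
  then have l: "pm (image_mset rep V)" "image_mset (cls H) (image_mset rep V) = V"
    using lift unfolding BG0_def by auto
  obtain a where "a \<in> H" "fac a = image_mset rep V" using realize_BG0[OF V l(1) l(2)] by auto
  then have "\<exists>a. a \<in> H \<and> fac a = image_mset rep V" by blast
  then have "lf V \<in> H \<and> fac (lf V) = image_mset rep V" unfolding lf_def by (rule someI_ex)
  then show ?thesis using l(2) unfolding beta_def by auto
qed

lemma beta_unit: "unit_of H u \<Longrightarrow> beta u = {#}"
  using beta_empty_iff unit_H by auto

lemma nmul_nonempty: "n \<ge> 1 \<Longrightarrow> U \<noteq> {#} \<Longrightarrow> nmul n (U :: 'b multiset) \<noteq> {#}"
  by (cases n) auto

theorem dir_a_b1:
  assumes ha: "\<forall>r. irred H r \<longrightarrow> abs_irred H r" and iU: "irred (BG0 H) U"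
  shows "abs_irred (BG0 H) U"
proof -
  have U: "U \<in> BG0 H" using irred_BG0[OF iU] .
  have Une: "U \<noteq> {#}" using iU unit_BG0 unfolding irred_def by auto
  define r where "r = lf U"
  have r: "r \<in> H" "fac r = image_mset rep U" "beta r = U" using lf_prop[OF U] r_def by auto
  have ir: "irred H r" using irred_iff[OF r(1)] r(3) iU by simp
  have ar: "abs_irred H r" using ha ir by auto
  have "length Vs = n \<and> (\<forall>V\<in>set Vs. assoc_in (BG0 H) V U)"
    if n: "n \<ge> 1" and Vs: "\<forall>V\<in>set Vs. irred (BG0 H) V" and s: "sum_list Vs = nmul n U" for n Vs
  proof -
    have VsB: "\<And>V. V \<in> set Vs \<Longrightarrow> V \<in> BG0 H" using Vs irred_BG0 by auto
    let ?xs = "map lf Vs"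
    have xsH: "set ?xs \<subseteq> H" using lf_prop VsB by auto
    have "fac (sum_list ?xs) = sum_list (map fac ?xs)" using fac_sum_list[OF xsH] .
    also have "map fac ?xs = map (image_mset rep) Vs" using lf_prop VsB by auto
    also have "sum_list (map (image_mset rep) Vs) = image_mset rep (sum_list Vs)"
      by (simp add: image_sum_list)
    also have "\<dots> = fac (nmul n r)" using s r fac_nmul image_nmul by simp
    finally have "fac (sum_list ?xs) = fac (nmul n r)" .
    then obtain u where u: "unit_of H u" "nmul n r = sum_list ?xs + u"
      using fac_assoc[OF sum_list_H[OF xsH] nmul_H[OF r(1)]] by auto
    have "Vs \<noteq> []"
    proof
      assume "Vs = []"
      then have "nmul n U = {#}" using s by simp
      then show False using nmul_nonempty[OF n Une] by simp
    qed
    then obtain V1 Vs' where VV: "Vs = V1 # Vs'" by (cases Vs) auto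
    have V1: "V1 \<in> BG0 H" using VsB VV by auto
    let ?ys = "(lf V1 + u) # map lf Vs'"
    have y1H: "lf V1 + u \<in> H" using lf_prop[OF V1] add_H unit_H[OF u(1)] by auto
    have by1: "beta (lf V1 + u) = V1" using beta_add lf_prop[OF V1] unit_H[OF u(1)] beta_unit[OF u(1)] by simp
    have iys: "\<forall>y\<in>set ?ys. irred H y"
    proof
      fix y assume "y \<in> set ?ys"
      then consider "y = lf V1 + u" | V where "V \<in> set Vs'" "y = lf V" by auto
      then show "irred H y"
      proof cases
        case 1 then show ?thesis using irred_iff[OF y1H] by1 Vs VV by simp
      next
        case 2
        then have "V \<in> BG0 H" "irred (BG0 H) V" using VsB Vs VV by auto
        then show ?thesis using irred_iff lf_prop 2 by auto
      qed
    qed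
    have "sum_list ?ys = sum_list ?xs + u" using VV by (simp add: algebra_simps)
    then have "sum_list ?ys = nmul n r" using u by simp
    then have L: "length ?ys = n" and A: "\<forall>y\<in>set ?ys. assoc_in H y r"
      using ar n iys unfolding abs_irred_def by blast+
    have "V = U" if V: "V \<in> set Vs" for V
    proof -
      from V VV consider "V = V1" | "V \<in> set Vs'" by auto
      then show ?thesis
      proof cases
        case 1
        have "fac (lf V1 + u) = fac r" using A assoc_H by auto
        then have "beta (lf V1 + u) = beta r" unfolding beta_def by simp
        then show ?thesis using by1 r 1 by simp
      next
        case 2
        have "fac (lf V) = fac r" using A assoc_H 2 by auto
        then have "beta (lf V) = beta r" unfolding beta_def by simp
        then show ?thesis using lf_prop VsB V r by auto
      qed
    qed
    then show ?thesis using L VV assoc_BG0 VsB U by auto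
  qed
  then show ?thesis unfolding abs_irred_def using iU by blast
qed

theorem dir_a_b2:
  assumes ha: "\<forall>r. irred H r \<longrightarrow> abs_irred H r" and iU: "irred (BG0 H) U"
    and g: "g \<in> G0 H - G1 H"
  shows "count U g \<le> 1"
proof (rule ccontr)
  assume c: "\<not> count U g \<le> 1"
  have U: "U \<in> BG0 H" using irred_BG0[OF iU] .
  obtain P R where PR: "prime_divisor H P" "prime_divisor H R" "P \<noteq> R" "cls H P = g" "cls H R = g"
    using not_G1[OF g] by auto
  define W where "W = U - {#g#} - {#g#}"
  have "0 < count U g" using c by linarith
  then have g1: "g \<in># U" using count_greater_zero_iff by metis
  have "0 < count (U - {#g#}) g" using c by simp
  then have g2: "g \<in># U - {#g#}" using count_greater_zero_iff by metis
  have U1: "U = add_mset g (U - {#g#})" using g1 by simp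
  have U2: "U - {#g#} = add_mset g W" unfolding W_def by (rule insert_DiffM[OF g2, symmetric])
  have UW: "U = add_mset g (add_mset g W)" using U1 U2 by simp
  have WG: "set_mset W \<subseteq> G0 H" using U UW unfolding BG0_def by auto
  define MW where "MW = image_mset rep W"
  have MW: "pm MW" "image_mset (cls H) MW = W" using lift[OF WG] MW_def by auto
  define M where "M = add_mset P (add_mset R MW)"
  define M1 where "M1 = add_mset P (add_mset P MW)"
  define M2 where "M2 = add_mset R (add_mset R MW)"
  have pms: "pm M" "pm M1" "pm M2" using MW PR unfolding M_def M1_def M2_def pm_def by auto
  have ims: "image_mset (cls H) M = U" "image_mset (cls H) M1 = U" "image_mset (cls H) M2 = U"
    using MW PR UW unfolding M_def M1_def M2_def by auto
  obtain r where r: "r \<in> H" "fac r = M" using realize_BG0[OF U pms(1) ims(1)] by auto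
  obtain r1 where r1: "r1 \<in> H" "fac r1 = M1" using realize_BG0[OF U pms(2) ims(2)] by auto
  obtain r2 where r2: "r2 \<in> H" "fac r2 = M2" using realize_BG0[OF U pms(3) ims(3)] by auto
  have br: "beta r = U" "beta r1 = U" "beta r2 = U" using r r1 r2 ims unfolding beta_def by auto
  have ir: "irred H r" "irred H r1" "irred H r2" using irred_iff r r1 r2 br iU by auto
  have ar: "abs_irred H r" using ha ir by auto
  have f2: "fac (nmul 2 r) = M + M" using fac_nmul[OF r(1), of 2] r by (simp add: numeral_2_eq_2)
  have f12: "fac (r1 + r2) = M1 + M2" using fac_add[OF r1(1) r2(1)] r1 r2 by simp
  have "M1 + M2 = M + M" unfolding M_def M1_def M2_def by simp
  then have "fac (r1 + r2) = fac (nmul 2 r)" using f2 f12 by simp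
  then obtain u where u: "unit_of H u" "nmul 2 r = r1 + r2 + u"
    using fac_assoc[OF add_H[OF r1(1) r2(1)] nmul_H[OF r(1)]] by auto
  have uH: "u \<in> H" using unit_H[OF u(1)] .
  have fu: "fac u = {#}" using unit_iff[OF uH] u by simp
  let ?ys = "[r1 + u, r2]"
  have y1: "r1 + u \<in> H" using add_H r1 uH by auto
  have "fac (r1 + u) = M1" using fac_add[OF r1(1) uH] fu r1 by simp
  then have "beta (r1 + u) = U" using ims unfolding beta_def by simp
  then have "irred H (r1 + u)" using irred_iff[OF y1] iU by simp
  then have iys: "\<forall>y\<in>set ?ys. irred H y" using ir by auto
  have "sum_list ?ys = nmul 2 r" using u by (simp add: algebra_simps)
  then have "\<forall>y\<in>set ?ys. assoc_in H y r" using ar iys unfolding abs_irred_def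
    by (metis one_le_numeral)
  then have "fac (r1 + u) = fac r" using assoc_H by auto
  then have "M1 = M" using \<open>fac (r1 + u) = M1\<close> r by simp
  then have "count M1 P = count M P" by simp
  then show False using PR(3) unfolding M_def M1_def by simp
qed

end

theorem mainTheorem12:
  fixes H :: "'a::ab_group_add set"
  assumes "krull_monoid H"
  shows "(\<forall>r. irred H r \<longrightarrow> abs_irred H r) \<longleftrightarrow>
         ((\<forall>U. irred (BG0 H) U \<longrightarrow> abs_irred (BG0 H) U) \<and>
          (\<forall>U g. irred (BG0 H) U \<longrightarrow> g \<in> G0 H - G1 H \<longrightarrow> count U g \<le> 1))"
proof -
  interpret krull H using assms by unfold_locales
  show ?thesis using dir_a_b1 dir_a_b2 dir_b_a by blast
qed


end
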